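(* Let $J'=(z_w,z_w')$ be a nonempty open interval, let $r:J'\to\mathbb{R}$ be differentiable, non-increasing, with $r(z)\neq 0$ and $|r(z)|<1$ for all $z\in J'$, and let $h:J'\to\mathbb{R}$ be differentiable with $\dot h(z)=1+h(z)^2-2r(z)h(z)$ on $J'$, having exactly one zero $z_*\in J'$. Let $G(z)=z-\dfrac{2h(z)}{2+h(z)^2-2r(z)h(z)}$. Then for every initial guess $z_0\in J'$ the iteration $z_{n+1}=G(z_n)$ is well defined and the sequence $(z_n)$ converges monotonically to $z_*$.
   Context: $\dot{}$ denotes differentiation with respect to $z$. "Converges monotonically" means all iterates lie in $J'$, the sequence is monotone, and its limit is $z_*$. *)

theory Defs
  imports "HOL-Analysis.Analysis"
begin

definition iterG :: "(real \<Rightarrow> real) \<Rightarrow> (real \<Rightarrow> real) \<Rightarrow> real \<Rightarrow> real" where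
  "iterG r h z = z - 2 * h z / (2 + (h z)^2 - 2 * r z * h z)"

end

theory Submission
  imports Defs
begin

lemma key_deriv:
  assumes hd: "(h has_real_derivative d) (at t)" and Dp: "2 + (h t)^2 - 2*c*h t > 0"
  shows "((\<lambda>t. 2*h t/(2 + (h t)^2 - 2*c*h t) - t) has_real_derivative
     (2*d*(2 - (h t)^2)/(2 + (h t)^2 - 2*c*h t)^2 - 1)) (at t)"
  using hd Dp
  apply (auto intro!: derivative_eq_intros)
  apply (simp add: field_simps power2_eq_square)
  done

lemma key_ineq:
  fixes d H c :: real
  assumes d0: "0 \<le> d" and dle: "d \<le> 1 + H^2 - 2*c*H" and c1: "\<bar>c\<bar> < 1"
  shows "2*d*(2 - H^2)/(2 + H^2 - 2*c*H)^2 - 1 \<le> 0"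
proof -
  define D where "D = 2 + H^2 - 2*c*H"
  have c2: "c^2 < 1" using c1 by (simp add: abs_square_less_1)
  have "D = (H - c)^2 + 2 - c^2" unfolding D_def by (simp add: power2_eq_square algebra_simps)
  hence Dp: "D > 1" using c2 by (smt (verit) zero_le_power2)
  have "2*d*(2 - H^2) \<le> D^2"
  proof (cases "2 - H^2 \<le> 0")
    case True
    hence "2*d*(2 - H^2) \<le> 0" using d0 by (simp add: mult_nonneg_nonpos)
    then show ?thesis by (smt (verit) zero_le_power2)
  next
    case False
    have "d*(2 - H^2) \<le> d*2" by (rule mult_left_mono) (use d0 in auto)
    hence "2*d*(2 - H^2) \<le> 4*d" by simp
    also have "\<dots> \<le> 4*(D - 1)" using dle unfolding D_def by simp
    also have "\<dots> \<le> D^2" using zero_le_power2[of "D - 2"] by (simp add: power2_eq_square algebra_simps)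
    finally show ?thesis .
  qed
  then show ?thesis using Dp unfolding D_def[symmetric] by (simp add: divide_le_eq_1 field_simps)
qed

theorem mainTheorem4:
  fixes a b zs z0 :: real and r h :: "real \<Rightarrow> real" and z :: "nat \<Rightarrow> real"
  assumes ab: "a < b"
    and r_diff: "\<forall>x\<in>{a<..<b}. r differentiable (at x)"
    and r_noninc: "\<forall>x\<in>{a<..<b}. \<forall>y\<in>{a<..<b}. x \<le> y \<longrightarrow> r y \<le> r x"
    and r_nz: "\<forall>x\<in>{a<..<b}. r x \<noteq> 0"
    and r_lt1: "\<forall>x\<in>{a<..<b}. \<bar>r x\<bar> < 1"
    and h_deriv: "\<forall>x\<in>{a<..<b}. (h has_real_derivative (1 + (h x)^2 - 2 * r x * h x)) (at x)"
    and zs_in: "zs \<in> {a<..<b}"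
    and h_zs: "h zs = 0"
    and h_unique: "\<forall>x\<in>{a<..<b}. h x = 0 \<longrightarrow> x = zs"
    and z0_in: "z0 \<in> {a<..<b}"
    and z_0: "z 0 = z0"
    and z_Suc: "\<forall>n. z (Suc n) = iterG r h (z n)"
  shows "(\<forall>n. z n \<in> {a<..<b} \<and> 2 + (h (z n))^2 - 2 * r (z n) * h (z n) \<noteq> 0)
         \<and> (incseq z \<or> decseq z) \<and> z \<longlonglongrightarrow> zs"
proof -
  let ?I = "{a<..<b}"
  let ?D = "\<lambda>c x. 2 + (h x)^2 - 2 * c * h x"
  have dpos: "1 + (h x)^2 - 2 * c * h x > 0" if "\<bar>c\<bar> < 1" for x c
  proof -
    have c2: "c^2 < 1" using that by (simp add: abs_square_less_1)
    have "1 + (h x)^2 - 2 * c * h x = (h x - c)^2 + 1 - c^2" by (simp add: power2_eq_square algebra_simps)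
    then show ?thesis using c2 by (smt (verit) zero_le_power2)
  qed
  have Dpos: "?D c x > 0" if "\<bar>c\<bar> < 1" for x c using dpos[OF that, of x] by simp
  have hmono: "h x < h y" if "x \<in> ?I" "y \<in> ?I" "x < y" for x y
    apply (rule DERIV_pos_imp_increasing[OF that(3)])
    using that h_deriv dpos r_lt1 by (metis greaterThanLessThan_iff order.strict_trans1 order.strict_trans2)
  have hmono': "h x \<le> h y" if "x \<in> ?I" "y \<in> ?I" "x \<le> y" for x y
    using hmono that by (cases "x = y") (auto intro: less_imp_le)
  have key: "2*h q/?D c q - q \<le> 2*h p/?D c p - p"
    if pq: "p \<le> q" "p \<in> ?I" "q \<in> ?I" and c: "\<bar>c\<bar> < 1"
      and cond: "\<forall>t\<in>{p..q}. (r t - c) * h t \<ge> 0" for p q c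
  proof -
    have "(\<lambda>t. 2*h t/?D c t - t) q \<le> (\<lambda>t. 2*h t/?D c t - t) p"
    proof (rule DERIV_nonpos_imp_nonincreasing[OF pq(1)])
      fix t assume t: "p \<le> t" "t \<le> q"
      hence tI: "t \<in> ?I" using pq by auto
      let ?d = "1 + (h t)^2 - 2 * r t * h t"
      have hd: "(h has_real_derivative ?d) (at t)" using h_deriv tI by blast
      have d0: "0 \<le> ?d" using dpos[of "r t" t] r_lt1 tI by simp
      have "(r t - c) * h t \<ge> 0" using cond t by auto
      hence dle: "?d \<le> 1 + (h t)^2 - 2*c*h t" by (simp add: algebra_simps)
      show "\<exists>y. ((\<lambda>t. 2*h t/?D c t - t) has_real_derivative y) (at t) \<and> y \<le> 0"
        using key_deriv[OF hd Dpos[OF c]] key_ineq[OF d0 dle c] by blast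
    qed
    then show ?thesis by simp
  qed
  have Gdef: "iterG r h x = x - 2 * h x / ?D (r x) x" for x unfolding iterG_def by simp
  have step_ge: "zs \<le> iterG r h x \<and> iterG r h x \<le> x" if x: "x \<in> ?I" "zs \<le> x" for x
  proof -
    have c: "\<bar>r x\<bar> < 1" using r_lt1 x by auto
    have "2*h x/?D (r x) x - x \<le> 2*h zs/?D (r x) zs - zs"
    proof (rule key[OF x(2) zs_in x(1) c], intro ballI)
      fix t assume t: "t \<in> {zs..x}"
      hence tI: "t \<in> ?I" using zs_in x by auto
      have "r x \<le> r t" using r_noninc tI x t by auto
      moreover have "h t \<ge> 0" using hmono'[OF zs_in tI] t h_zs by auto
      ultimately show "(r t - r x) * h t \<ge> 0" by simp
    qed
    moreover have "h x \<ge> 0" using hmono'[OF zs_in x(1) x(2)] h_zs by simp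
    ultimately show ?thesis using Dpos[OF c, of x] h_zs unfolding Gdef by simp
  qed
  have step_le: "iterG r h x \<le> zs \<and> x \<le> iterG r h x" if x: "x \<in> ?I" "x \<le> zs" for x
  proof -
    have c: "\<bar>r x\<bar> < 1" using r_lt1 x by auto
    have "2*h zs/?D (r x) zs - zs \<le> 2*h x/?D (r x) x - x"
    proof (rule key[OF x(2) x(1) zs_in c], intro ballI)
      fix t assume t: "t \<in> {x..zs}"
      hence tI: "t \<in> ?I" using zs_in x by auto
      have "r t \<le> r x" using r_noninc tI x t by auto
      moreover have "h t \<le> 0" using hmono'[OF tI zs_in] t h_zs by auto
      ultimately show "(r t - r x) * h t \<ge> 0" by (simp add: mult_nonpos_nonpos)
    qed
    moreover have "h x \<le> 0" using hmono'[OF x(1) zs_in x(2)] h_zs by simp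
    ultimately show ?thesis using Dpos[OF c, of x] h_zs unfolding Gdef
      by (simp add: divide_nonpos_pos)
  qed
  have lim_fix: "L = zs" if L: "L \<in> ?I" and conv: "z \<longlonglongrightarrow> L" for L
  proof -
    have "isCont r L" using r_diff L by (simp add: differentiable_imp_continuous_within)
    moreover have "isCont h L" using h_deriv L DERIV_isCont by blast
    moreover have "?D (r L) L \<noteq> 0" using Dpos[of "r L" L] r_lt1 L by auto
    ultimately have "isCont (iterG r h) L" unfolding iterG_def
      by (intro continuous_intros) auto
    hence "(\<lambda>n. iterG r h (z n)) \<longlonglongrightarrow> iterG r h L"
      using conv isCont_tendsto_compose by blast
    moreover have "(\<lambda>n. iterG r h (z n)) \<longlonglongrightarrow> L"
    proof -
      have "(\<lambda>n. z (Suc n)) \<longlonglongrightarrow> L" using LIMSEQ_Suc[OF conv] .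
      then show ?thesis using z_Suc by simp
    qed
    ultimately have "iterG r h L = L" using LIMSEQ_unique by blast
    hence "2 * h L / ?D (r L) L = 0" unfolding Gdef by simp
    hence "h L = 0" using Dpos[of "r L" L] r_lt1 L by auto
    then show ?thesis using h_unique L by blast
  qed
  show ?thesis
  proof (cases "zs \<le> z0")
    case True
    have inv: "zs \<le> z n \<and> z n \<le> z0" for n
    proof (induction n)
      case 0 then show ?case using z_0 True by simp
    next
      case (Suc n)
      hence "z n \<in> ?I" using zs_in z0_in by auto
      then show ?case using step_ge[of "z n"] Suc z_Suc by force
    qed
    have zI: "z n \<in> ?I" for n using inv[of n] zs_in z0_in by auto
    have dec: "decseq z"
      by (rule decseq_SucI) (use step_ge zI inv z_Suc in auto)
    obtain L where L: "z \<longlonglongrightarrow> L" "\<forall>i. L \<le> z i"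
      using decseq_convergent[OF dec, of zs] inv by blast
    have "L \<le> z0" using L(2) z_0 by metis
    moreover have "zs \<le> L" using LIMSEQ_le_const[OF L(1)] inv by blast
    ultimately have "L \<in> ?I" using zs_in z0_in by auto
    hence "L = zs" using lim_fix L by blast
    then show ?thesis using zI Dpos r_lt1 dec L by (metis less_irrefl)
  next
    case False
    have inv: "z0 \<le> z n \<and> z n \<le> zs" for n
    proof (induction n)
      case 0 then show ?case using z_0 False by simp
    next
      case (Suc n)
      hence "z n \<in> ?I" using zs_in z0_in by auto
      then show ?case using step_le[of "z n"] Suc z_Suc by force
    qed
    have zI: "z n \<in> ?I" for n using inv[of n] zs_in z0_in by auto
    have inc: "incseq z"
      by (rule incseq_SucI) (use step_le zI inv z_Suc in auto)
    obtain L where L: "z \<longlonglongrightarrow> L" "\<forall>i. z i \<le> L"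
      using incseq_convergent[OF inc, of zs] inv by blast
    have "z0 \<le> L" using L(2) z_0 by metis
    moreover have "L \<le> zs" using LIMSEQ_le_const2[OF L(1)] inv by blast
    ultimately have "L \<in> ?I" using zs_in z0_in by auto
    hence "L = zs" using lim_fix L by blast
    then show ?thesis using zI Dpos r_lt1 inc L by (metis less_irrefl)
  qed
qed

end
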